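(* Let $k<n$. No location-allocation mechanism $M_A$ that is allocation-anonymous is DIC.
   Context: There are $n$ agents $N=\{1,\dots,n\}$ with locations $x_i\in[0,1]$, profile $\boldsymbol{x}$; the facility has capacity $k$ (positive integer). Let $N_k=\{A\subseteq N: 0<|A|\le k\}$. A location-allocation mechanism is a function $M_A:[0,1]^n\to[0,1]\times N_k$, written $M_A(\boldsymbol{x})=(s_{\boldsymbol{x}},A_{\boldsymbol{x}})$, choosing from the reported locations a facility location and a set of agents allowed to be served. Agent $i$ with true location $x_i$ gets utility $1-|s-x_i|$ from outcome $(s,A)$ if $i\in A$, and $0$ if $i\notin A$. $M_A$ is DIC if for every agent $i$, every true location $x_i$, every report $x_i'$ and every reports $\hat{\boldsymbol{x}}_{-i}$ of the other agents, agent $i$'s utility from $M_A(x_i,\hat{\boldsymbol{x}}_{-i})$ is at least its utility from $M_A(x_i',\hat{\boldsymbol{x}}_{-i})$. A profile $\boldsymbol{x}$ is $i$-identifiable if $x_i\ne x_j$ for all $j\ne i$. $M_A$ is allocation-anonymous if for all distinct $i,j\in N$ and every $i$-identifiable profile $\boldsymbol{x}$, letting $\boldsymbol{x}'$ be obtained from $\boldsymbol{x}$ by swapping the locations of $i$ and $j$ ($x_i'=x_j$, $x_j'=x_i$, $x_\ell'=x_\ell$ otherwise), we have $i\in A_{\boldsymbol{x}}$ if and only if $j\in A_{\boldsymbol{x}'}$. *)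

theory Defs
  imports Main "HOL-Library.FuncSet" Complex_Main
begin

definition profiles :: "nat \<Rightarrow> (nat \<Rightarrow> real) set" where
  "profiles n = ({1..n} \<rightarrow>\<^sub>E {0..1})"

definition Nk :: "nat \<Rightarrow> nat \<Rightarrow> nat set set" where
  "Nk n k = {A. A \<subseteq> {1..n} \<and> 0 < card A \<and> card A \<le> k}"

definition la_mechanism :: "nat \<Rightarrow> nat \<Rightarrow> ((nat \<Rightarrow> real) \<Rightarrow> real \<times> nat set) \<Rightarrow> bool" where
  "la_mechanism n k M \<longleftrightarrow>
     (\<forall>x\<in>profiles n. fst (M x) \<in> {0..1} \<and> snd (M x) \<in> Nk n k)"

definition utility :: "nat \<Rightarrow> real \<Rightarrow> real \<times> nat set \<Rightarrow> real" where
  "utility i xi out = (if i \<in> snd out then 1 - \<bar>fst out - xi\<bar> else 0)"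

(* dominant-strategy incentive compatibility: x is (x_i, xhat_{-i}), with
   true location x i; x(i := v) is the misreport *)
definition DIC :: "nat \<Rightarrow> ((nat \<Rightarrow> real) \<Rightarrow> real \<times> nat set) \<Rightarrow> bool" where
  "DIC n M \<longleftrightarrow>
     (\<forall>i\<in>{1..n}. \<forall>x\<in>profiles n. \<forall>v\<in>{0..1::real}.
        utility i (x i) (M x) \<ge> utility i (x i) (M (x(i := v))))"

definition identifiable :: "nat \<Rightarrow> nat \<Rightarrow> (nat \<Rightarrow> real) \<Rightarrow> bool" where
  "identifiable n i x \<longleftrightarrow> (\<forall>j\<in>{1..n}. j \<noteq> i \<longrightarrow> x i \<noteq> x j)"

definition allocation_anonymous :: "nat \<Rightarrow> ((nat \<Rightarrow> real) \<Rightarrow> real \<times> nat set) \<Rightarrow> bool" where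
  "allocation_anonymous n M \<longleftrightarrow>
     (\<forall>i\<in>{1..n}. \<forall>j\<in>{1..n}. \<forall>x\<in>profiles n. i \<noteq> j \<longrightarrow> identifiable n i x \<longrightarrow>
        (i \<in> snd (M x) \<longleftrightarrow> j \<in> snd (M (x(i := x j, j := x i)))))"

end

theory Submission
  imports Defs
begin

lemma upd_prof:
  assumes "x \<in> profiles n" "i \<in> {1..n}" "v \<in> {0..1::real}"
  shows "x(i := v) \<in> profiles n"
  using assms unfolding profiles_def by (auto simp: PiE_def Pi_def extensional_def)

lemma key:
  assumes D: "DIC n M" and L: "la_mechanism n k M" and i: "i \<in> {1..n}"
    and x: "x \<in> profiles n" and v: "v \<in> {0..1::real}" and t: "0 < t" "t < 1"
    and served: "i \<in> snd (M (x(i := v)))"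
  shows "i \<in> snd (M (x(i := t)))"
proof -
  have y: "x(i := t) \<in> profiles n" using upd_prof[OF x i] t by auto
  have xv: "x(i := v) \<in> profiles n" using upd_prof[OF x i v] .
  have "utility i t (M (x(i := t))) \<ge> utility i t (M ((x(i := t))(i := v)))"
    using D i y v unfolding DIC_def by (metis fun_upd_same)
  moreover have "fst (M (x(i := v))) \<in> {0..1}" using L xv unfolding la_mechanism_def by auto
  hence "utility i t (M ((x(i := t))(i := v))) > 0"
    using served t unfolding utility_def by auto
  ultimately have "utility i t (M (x(i := t))) > 0" by linarith
  thus ?thesis unfolding utility_def by (auto split: if_splits)
qed

theorem theorem5p3:
  fixes n k :: nat and M :: "(nat \<Rightarrow> real) \<Rightarrow> real \<times> nat set"
  assumes "0 < k" and "k < n"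
    and "la_mechanism n k M"
    and "allocation_anonymous n M"
  shows "\<not> DIC n M"
proof
  assume D: "DIC n M"
  define P where "P = (\<lambda>l::nat. if l \<in> {1..n} then (1/2::real) else undefined)"
  have P: "P \<in> profiles n" unfolding profiles_def P_def by auto
  define e where "e = (\<lambda>i. P(i := 1/4))"
  have eP: "i \<in> {1..n} \<Longrightarrow> e i \<in> profiles n" for i
    unfolding e_def using upd_prof[OF P] by auto
  have PP: "i \<in> {1..n} \<Longrightarrow> P(i := 1/2) = P" for i
    unfolding P_def by (auto simp: fun_eq_iff)
  have iff1: "i \<in> snd (M P) \<longleftrightarrow> i \<in> snd (M (e i))" if i: "i \<in> {1..n}" for i
  proof
    assume "i \<in> snd (M P)"
    hence "i \<in> snd (M (P(i := 1/2)))" using PP[OF i] by simp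
    thus "i \<in> snd (M (e i))" unfolding e_def
      using key[OF D assms(3) i P, of "1/2" "1/4"] by auto
  next
    assume "i \<in> snd (M (e i))"
    hence "i \<in> snd (M (P(i := 1/2)))" unfolding e_def
      using key[OF D assms(3) i P, of "1/4" "1/2"] by auto
    thus "i \<in> snd (M P)" using PP[OF i] by simp
  qed
  have same: "i \<in> snd (M P) \<longleftrightarrow> j \<in> snd (M P)"
    if i: "i \<in> {1..n}" and j: "j \<in> {1..n}" and ij: "i \<noteq> j" for i j
  proof -
    have idf: "identifiable n i (e i)"
      unfolding identifiable_def e_def P_def using i by auto
    have sw: "(e i)(i := e i j, j := e i i) = e j"
      unfolding e_def P_def using i j ij by (auto simp: fun_eq_iff)
    have "i \<in> snd (M (e i)) \<longleftrightarrow> j \<in> snd (M (e j))"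
      using assms(4) i j ij eP[OF i] idf sw unfolding allocation_anonymous_def by metis
    thus ?thesis using iff1[OF i] iff1[OF j] by simp
  qed
  have A: "snd (M P) \<subseteq> {1..n}" "0 < card (snd (M P))" "card (snd (M P)) \<le> k"
    using assms(3) P unfolding la_mechanism_def Nk_def by auto
  then obtain i where i: "i \<in> snd (M P)" by (metis card.empty less_irrefl ex_in_conv)
  have "snd (M P) \<noteq> {1..n}" using A assms(2) by auto
  then obtain j where j: "j \<in> {1..n}" "j \<notin> snd (M P)" using A(1) by blast
  have "i \<in> {1..n}" using A i by auto
  moreover have "i \<noteq> j" using i j by auto
  ultimately show False using same[of i j] i j by auto
qed

end
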